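(* Let $n\ge2$, $f\in C(\mathbb{R}^{n+1},\mathbb{R}^n)$ be $\kappa$-Lipschitz and $\mathbb{Z}^{n+1}$-periodic in $(r,\tau)$, and let $v(\tau;c)$ solve $\dot v=f(v,\tau)$, $v(0)=c\in\mathbb{R}^n$. Assume there is $C_0>0$ with $v_i(\tau;c^2)-v_i(\tau;c^1)\le C_0$ for all $i$, $\tau>0$ and all $c^1,c^2\in\mathbb{R}^n$ with $c^1-c^2\in[0,1]^n$. Then for all $\sigma,l,t>0$, all $c\in\mathbb{R}^n$ and all $i\in\{1,\dots,n\}$, \[v_i((\sigma+l)t;(\sigma+l)c)\le v_i(\sigma t;\sigma c)+v_i(lt;lc)+2(\|f_i\|_\infty+C_0+1).\] *)

theory Defs
  imports "HOL-Analysis.Analysis"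
begin

definition comp_sup_norm :: "(real^'n \<Rightarrow> real \<Rightarrow> real^'n) \<Rightarrow> 'n \<Rightarrow> real" where
  "comp_sup_norm f i = (SUP p\<in>(UNIV :: ((real^'n) \<times> real) set). \<bar>f (fst p) (snd p) $ i\<bar>)"

end

theory Submission
  imports Defs
begin

lemma vbound:
  fixes g :: "real \<Rightarrow> 'b::real_normed_vector"
  assumes S: "convex S"
    and d: "\<And>x. x\<in>S \<Longrightarrow> (g has_vector_derivative D x) (at x within S)"
    and B: "\<And>x. x\<in>S \<Longrightarrow> norm (D x) \<le> B"
    and x: "p\<in>S" and y: "q\<in>S"
  shows "norm (g p - g q) \<le> B * \<bar>p - q\<bar>"
proof -
  have "norm (g p - g q) \<le> B * norm (p - q)"
  proof (rule differentiable_bound[where f' = "\<lambda>x h. h *\<^sub>R D x", OF S _ _ x y])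
    fix z assume "z \<in> S"
    then show "(g has_derivative (\<lambda>h. h *\<^sub>R D z)) (at z within S)"
      using d has_vector_derivative_def by blast
  next
    fix z assume "z \<in> S"
    then show "onorm (\<lambda>h. h *\<^sub>R D z) \<le> B"
      using B onorm_scaleR_left[OF bounded_linear_ident, of "D z"] by (simp add: onorm_id)
  qed
  then show ?thesis by simp
qed

lemma ode_unique:
  fixes x y :: "real \<Rightarrow> 'a::real_normed_vector" and F :: "'a \<Rightarrow> real \<Rightarrow> 'a"
  assumes K: "\<And>a b s. norm (F a s - F b s) \<le> K * norm (a - b)" and K0: "K \<ge> 0"
    and dx: "\<And>\<tau>. \<tau> \<ge> 0 \<Longrightarrow> (x has_vector_derivative F (x \<tau>) \<tau>) (at \<tau> within {0..})"
    and dy: "\<And>\<tau>. \<tau> \<ge> 0 \<Longrightarrow> (y has_vector_derivative F (y \<tau>) \<tau>) (at \<tau> within {0..})"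
    and x0: "x 0 = y 0"
    and tau: "\<tau> \<ge> 0"
  shows "x \<tau> = y \<tau>"
proof -
  define h where "h = 1 / (2*K + 2)"
  have hpos: "h > 0" using K0 by (simp add: h_def)
  have Kh: "K * h \<le> 1/2" using K0 by (simp add: h_def field_simps)
  have step: "\<forall>s\<in>{0..real k * h}. x s = y s" for k :: nat
  proof (induction k)
    case 0 then show ?case using x0 by auto
  next
    case (Suc k)
    define a where "a = real k * h"
    have a0: "a \<ge> 0" using hpos by (simp add: a_def)
    let ?S = "{a..a+h}"
    have sub: "?S \<subseteq> {0..}" using a0 by auto
    have dz: "((\<lambda>t. x t - y t) has_vector_derivative (F (x s) s - F (y s) s)) (at s within ?S)"
      if "s \<in> ?S" for s
    proof -
      have "s \<ge> 0" using that a0 by auto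
      then show ?thesis
        using has_vector_derivative_diff[OF dx dy] has_vector_derivative_within_subset[OF _ sub] by blast
    qed
    have cz: "continuous_on ?S (\<lambda>t. norm (x t - y t))"
      apply (rule continuous_on_norm)
      using dz has_vector_derivative_continuous continuous_on_eq_continuous_within by blast
    obtain s0 where s0: "s0 \<in> ?S" "\<forall>t\<in>?S. norm (x t - y t) \<le> norm (x s0 - y s0)"
      using continuous_attains_sup[OF compact_Icc _ cz] a0 hpos by auto
    define M where "M = norm (x s0 - y s0)"
    have M0: "M \<ge> 0" by (simp add: M_def)
    have za: "x a - y a = 0" using Suc.IH a0 by (auto simp: a_def)
    have "norm ((x s0 - y s0) - (x a - y a)) \<le> (K * M) * \<bar>s0 - a\<bar>"
    proof (rule vbound[where S = ?S and D = "\<lambda>s. F (x s) s - F (y s) s"])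
      show "convex ?S" by (rule convex_real_interval)
      show "((\<lambda>t. x t - y t) has_vector_derivative F (x s) s - F (y s) s) (at s within ?S)"
        if "s \<in> ?S" for s using dz that by blast
      show "norm (F (x s) s - F (y s) s) \<le> K * M" if "s \<in> ?S" for s
        using K[of "x s" s "y s"] mult_left_mono[OF s0(2)[rule_format, OF that] K0]
        by (simp add: M_def)
      show "s0 \<in> ?S" by (rule s0)
      show "a \<in> ?S" using hpos by auto
    qed
    then have "M \<le> (K * M) * \<bar>s0 - a\<bar>" using za by (simp add: M_def)
    also have "\<dots> \<le> (K * M) * h" using s0(1) K0 M0 by (intro mult_left_mono) auto
    also have "\<dots> = (K * h) * M" by simp
    also have "\<dots> \<le> M / 2" using Kh M0 mult_right_mono[OF Kh M0] by simp
    finally have "M \<le> 0" by simp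
    then have zS: "\<forall>t\<in>?S. x t = y t" using s0(2) M_def by (auto)
    show ?case
    proof
      fix s assume s: "s \<in> {0..real (Suc k) * h}"
      show "x s = y s"
      proof (cases "s \<le> a")
        case True then show ?thesis using Suc.IH s by (auto simp: a_def)
      next
        case False then show ?thesis using zS s by (auto simp: a_def algebra_simps)
      qed
    qed
  qed
  obtain k :: nat where "\<tau> / h \<le> real k" using real_arch_simple by blast
  then have "\<tau> \<le> real k * h" using hpos by (simp add: field_simps)
  then show ?thesis using step[of k] tau by auto
qed

theorem lemma3p2:
  fixes f :: "real^'n \<Rightarrow> real \<Rightarrow> real^'n"
    and v :: "real \<Rightarrow> real^'n \<Rightarrow> real^'n"
    and \<kappa> C0 :: real
  assumes n2: "CARD('n) \<ge> 2"
    and cont: "continuous_on UNIV (\<lambda>p::(real^'n) \<times> real. f (fst p) (snd p))"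
    and lip: "\<kappa>-lipschitz_on UNIV (\<lambda>p::(real^'n) \<times> real. f (fst p) (snd p))"
    and per: "\<And>x s k m. (\<forall>j. k $ j \<in> \<int>) \<Longrightarrow> m \<in> \<int> \<Longrightarrow> f (x + k) (s + m) = f x s"
    and ode: "\<And>c \<tau>. \<tau> \<ge> 0 \<Longrightarrow>
               ((\<lambda>t. v t c) has_vector_derivative f (v \<tau> c) \<tau>) (at \<tau> within {0..})"
    and init: "\<And>c. v 0 c = c"
    and C0pos: "C0 > 0"
    and C0: "\<And>c1 c2 j \<tau>. (\<forall>k. 0 \<le> (c1 - c2) $ k \<and> (c1 - c2) $ k \<le> 1) \<Longrightarrow> \<tau> > 0 \<Longrightarrow>
               v \<tau> c2 $ j - v \<tau> c1 $ j \<le> C0"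
    and \<sigma>: "\<sigma> > 0" and l: "l > 0" and t: "t > 0"
  shows "v ((\<sigma> + l) * t) ((\<sigma> + l) *\<^sub>R c) $ i
           \<le> v (\<sigma> * t) (\<sigma> *\<^sub>R c) $ i + v (l * t) (l *\<^sub>R c) $ i
              + 2 * (comp_sup_norm f i + C0 + 1)"
proof -
  have K0: "\<kappa> \<ge> 0" using lip by (rule lipschitz_on_nonneg)
  have fK: "norm (f a s - f b s) \<le> \<kappa> * norm (a - b)" for a b s
    using lipschitz_onD[OF lip, of "(a, s)" "(b, s)"] by (simp add: dist_Pair_Pair dist_norm)
  have shiftK: "v \<tau> (c + k) = v \<tau> c + k" if k: "\<forall>j. k $ j \<in> \<int>" and tau: "\<tau> \<ge> 0" for \<tau> c k
  proof (rule ode_unique[where F = f and K = \<kappa>, OF fK K0 _ _ _ tau])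
    show "((\<lambda>t. v t (c + k)) has_vector_derivative f (v s (c + k)) s) (at s within {0..})"
      if "s \<ge> 0" for s using ode that by blast
    show "((\<lambda>t. v t c + k) has_vector_derivative f (v s c + k) s) (at s within {0..})"
      if "s \<ge> 0" for s
      using has_vector_derivative_add[OF ode[OF that] has_vector_derivative_const[of k]]
        per[OF k, where x="v s c" and s=s and m=0] by simp
    show "v 0 (c + k) = v 0 c + k" by (simp add: init)
  qed
  have shiftT: "v (real m + \<tau>) C = v \<tau> (v (real m) C)" if tau: "\<tau> \<ge> 0" for m :: nat and \<tau> C
  proof -
    have "v (real m + \<tau>) C = v \<tau> (v (real m) C)" 
    proof (rule ode_unique[where F = f and K = \<kappa>, OF fK K0 _ _ _ tau])
      show "((\<lambda>t. v (real m + t) C) has_vector_derivative f (v (real m + s) C) s) (at s within {0..})"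
        if s: "s \<ge> 0" for s
      proof -
        have d1: "((\<lambda>t. real m + t) has_vector_derivative 1) (at s within {0..})"
          by (auto intro!: derivative_eq_intros)
        have d2: "((\<lambda>t. v t C) has_vector_derivative f (v (real m + s) C) (real m + s))
                   (at (real m + s) within (\<lambda>t. real m + t) ` {0..})"
          by (rule has_vector_derivative_within_subset[OF ode]) (use s in auto)
        have "f (v (real m + s) C) (real m + s) = f (v (real m + s) C) s"
          using per[where k=0 and x="v (real m + s) C" and s=s and m="real m"] by (simp add: add.commute)
        then show ?thesis using vector_diff_chain_within[OF d1 d2] by (simp add: o_def)
      qed
      show "((\<lambda>t. v t (v (real m) C)) has_vector_derivative f (v s (v (real m) C)) s) (at s within {0..})"
        if "s \<ge> 0" for s using ode that by blast
      show "v (real m + 0) C = v 0 (v (real m) C)" by (simp add: init)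
    qed
    then show ?thesis .
  qed
  have L: "v \<tau> (c + d) $ j \<le> v \<tau> c $ j + d $ j + 1 + C0" if tau: "\<tau> > 0" for \<tau> c d j
  proof -
    define K :: "real^'n" where "K = (\<chi> j. of_int \<lfloor>d $ j\<rfloor>)"
    define \<rho> where "\<rho> = d - K"
    define one :: "real^'n" where "one = (\<chi> j. 1)"
    have Kint: "\<forall>j. K $ j \<in> \<int>" by (simp add: K_def)
    have oneint: "\<forall>j. one $ j \<in> \<int>" by (simp add: one_def)
    have "0 \<le> ((c + one) - (c + \<rho>)) $ k \<and> ((c + one) - (c + \<rho>)) $ k \<le> 1" for k
    proof -
      have e: "((c + one) - (c + \<rho>)) $ k = 1 - (d$k - of_int \<lfloor>d$k\<rfloor>)" by (simp add: one_def \<rho>_def K_def)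
      have "of_int \<lfloor>d$k\<rfloor> \<le> d$k" "d$k < of_int \<lfloor>d$k\<rfloor> + 1" by linarith+
      then show ?thesis unfolding e by linarith
    qed
    then have "\<forall>k. 0 \<le> ((c + one) - (c + \<rho>)) $ k \<and> ((c + one) - (c + \<rho>)) $ k \<le> 1"
      by blast
    from C0[OF this tau, of j] have 1: "v \<tau> (c + \<rho>) $ j - v \<tau> (c + one) $ j \<le> C0" .
    have 2: "v \<tau> (c + one) = v \<tau> c + one" using shiftK[OF oneint] tau by simp
    have "v \<tau> (c + d) = v \<tau> ((c + \<rho>) + K)" by (simp add: \<rho>_def)
    also have "\<dots> = v \<tau> (c + \<rho>) + K" using shiftK[OF Kint] tau by simp
    finally have 3: "v \<tau> (c + d) $ j = v \<tau> (c + \<rho>) $ j + of_int \<lfloor>d $ j\<rfloor>" by (simp add: K_def)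
    show ?thesis using 1 2 3 by (simp add: one_def) linarith
  qed
  define B where "B = comp_sup_norm f i"
  have fbdd: "\<exists>M. \<forall>x s. \<bar>f x s $ i\<bar> \<le> M"
  proof -
    let ?D = "cbox (0::real^'n) (\<chi> j. 1) \<times> {0..1::real}"
    have "compact ((\<lambda>p. f (fst p) (snd p)) ` ?D)"
      by (rule compact_continuous_image[OF continuous_on_subset[OF cont subset_UNIV] compact_Times[OF compact_cbox compact_Icc]])
    then obtain M where M: "\<And>p. p \<in> ?D \<Longrightarrow> norm (f (fst p) (snd p)) \<le> M"
      using compact_imp_bounded[OF \<open>compact _\<close>] unfolding bounded_iff by (meson imageI)
    have "\<bar>f x s $ i\<bar> \<le> M" for x s
    proof -
      define k :: "real^'n" where "k = (\<chi> j. of_int \<lfloor>x $ j\<rfloor>)"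
      have kint: "\<forall>j. k $ j \<in> \<int>" by (simp add: k_def)
      have "f x s = f ((x - k) + k) ((s - of_int \<lfloor>s\<rfloor>) + of_int \<lfloor>s\<rfloor>)" by simp
      also have "\<dots> = f (x - k) (s - of_int \<lfloor>s\<rfloor>)" by (rule per[OF kint]) simp
      finally have e: "f x s = f (x - k) (s - of_int \<lfloor>s\<rfloor>)" .
      have "(x - k, s - of_int \<lfloor>s\<rfloor>) \<in> ?D"
        using floor_correct[of s] by (auto simp: k_def mem_box_cart) linarith+
      from M[OF this] e have "norm (f x s) \<le> M" by simp
      then show ?thesis using component_le_norm_cart[of "f x s" i] by linarith
    qed
    then show ?thesis by blast
  qed
  have fB: "\<bar>f x s $ i\<bar> \<le> B" for x s
  proof -
    from fbdd obtain M where "\<forall>x s. \<bar>f x s $ i\<bar> \<le> M" by blast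
    then have "bdd_above ((\<lambda>p. \<bar>f (fst p) (snd p) $ i\<bar>) ` UNIV)" by (auto intro!: bdd_aboveI2)
    from cSUP_upper[OF _ this, of "(x, s)"] show ?thesis by (simp add: B_def comp_sup_norm_def)
  qed
  have B0: "B \<ge> 0" using fB[of 0 0] by linarith
  have tbound: "\<bar>v a c' $ i - v b c' $ i\<bar> \<le> B * \<bar>a - b\<bar>" if "a \<ge> 0" "b \<ge> 0" for a b c'
  proof -
    have "norm (v a c' $ i - v b c' $ i) \<le> B * \<bar>a - b\<bar>"
    proof (rule vbound[where S = "{0..}" and D = "\<lambda>s. f (v s c') s $ i"])
      show "convex {0::real..}" by (rule convex_real_interval)
      show "((\<lambda>s. v s c' $ i) has_vector_derivative f (v s c') s $ i) (at s within {0..})"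
        if "s \<in> {0..}" for s
        using bounded_linear.has_vector_derivative[OF bounded_linear_vec_nth ode, of s c' i] that by simp
      show "norm (f (v s c') s $ i) \<le> B" for s using fB by simp
    qed (use that in auto)
    then show ?thesis by simp
  qed
  define T1 where "T1 = \<sigma> * t"
  define T2 where "T2 = l * t"
  have T1: "T1 > 0" and T2: "T2 > 0" using \<sigma> l t by (auto simp: T1_def T2_def)
  define m where "m = nat \<lfloor>T1\<rfloor>"
  have mT1: "real m \<le> T1" "T1 < real m + 1" using T1 by (auto simp: m_def)
  define C where "C = (\<sigma> + l) *\<^sub>R c"
  define P where "P = v (real m) C"
  have s1: "v (T1 + T2) C $ i \<le> v (real m + T2) C $ i + B"
  proof -
    have "\<bar>v (T1 + T2) C $ i - v (real m + T2) C $ i\<bar> \<le> B * \<bar>(T1 + T2) - (real m + T2)\<bar>"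
      using T1 T2 by (intro tbound) auto
    also have "\<dots> \<le> B * 1" using mT1 B0 by (intro mult_left_mono) auto
    finally show ?thesis by linarith
  qed
  have s2: "v (real m + T2) C = v T2 P" using shiftT T2 by (simp add: P_def)
  have s3: "v T2 P $ i \<le> v T2 (l *\<^sub>R c) $ i + (P - l *\<^sub>R c) $ i + 1 + C0"
    using L[OF T2, of "l *\<^sub>R c" "P - l *\<^sub>R c" i] by simp
  have s4: "P $ i - (l *\<^sub>R c) $ i \<le> v (real m) (\<sigma> *\<^sub>R c) $ i + 1 + C0"
  proof (cases "m = 0")
    case True
    then show ?thesis using C0pos by (simp add: P_def C_def init algebra_simps)
  next
    case False
    then have "real m > 0" by simp
    from L[OF this, of "\<sigma> *\<^sub>R c" "l *\<^sub>R c" i] show ?thesis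
      by (simp add: P_def C_def scaleR_add_left)
  qed
  have s5: "v (real m) (\<sigma> *\<^sub>R c) $ i \<le> v T1 (\<sigma> *\<^sub>R c) $ i + B"
  proof -
    have "\<bar>v (real m) (\<sigma> *\<^sub>R c) $ i - v T1 (\<sigma> *\<^sub>R c) $ i\<bar> \<le> B * \<bar>real m - T1\<bar>"
      using T1 by (intro tbound) auto
    also have "\<dots> \<le> B * 1" using mT1 B0 by (intro mult_left_mono) auto
    finally show ?thesis by linarith
  qed
  have "(\<sigma> + l) * t = T1 + T2" by (simp add: T1_def T2_def algebra_simps)
  then show ?thesis using s1 s2 s3 s4 s5
    by (simp add: C_def[symmetric] T1_def[symmetric] T2_def[symmetric] B_def[symmetric])
qed

end
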